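(* Let $d_R\ge2$, let the glue code $H_G$ be compatible with the memory via $S,T$, and let $J_G$ be any matrix with $\mathrm{rs}J_G\subseteq\ker H_G$ and $J_{Z,A}=J_GS$ (such $J_G$ exists when the glue code is coarsely devised for $\Sigma$). Let $P=P_{M\text{-}B}$ be the matrix such that $xP$ places $x\in\mathbb F_2^n$ on block $u_0$ and zeros elsewhere, and $P_{ob}$ the matrix such that $yP_{ob}$ places $y\in\mathbb F_2^{n_G}$ on the open-boundary block $u_{d_R-1}$ and zeros elsewhere. Then $\mathrm{rs}H_X=\mathrm{rs}(H^{M\text{-}B}_XP^{\mathrm T})$, $\mathrm{rs}(H_ZP)\subseteq\mathrm{rs}H^{M\text{-}B}_Z$, $\mathrm{rs}J_X=\mathrm{rs}(J^{M\text{-}B}_XP^{\mathrm T})$, $\mathrm{rs}(J_ZP)=\mathrm{rs}J^{M\text{-}B}_Z$, and $\mathrm{rs}(J_{Z,A}P+J_GP_{ob})\subseteq\mathrm{rs}H^{M\text{-}B}_Z$.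
   Context: All vectors are row vectors over $\mathbb F_2$; $\mathrm{rs}A$ is the row space, $\ker A=\{x:Ax^{\mathrm T}=0\}$, $VM=\{vM:v\in V\}$, $E_m$ the identity. The memory is a CSS subsystem code specified by $H_X\in\mathbb F_2^{r_X\times n}$, $H_Z\in\mathbb F_2^{r_Z\times n}$, $J_X,J_Z\in\mathbb F_2^{k\times n}$, $F_X,F_Z\in\mathbb F_2^{k_g\times n}$ satisfying $\ker H_X=\mathrm{rs}H_Z\oplus\mathrm{rs}J_Z\oplus\mathrm{rs}F_Z$, $\ker H_Z=\mathrm{rs}H_X\oplus\mathrm{rs}J_X\oplus\mathrm{rs}F_X$, $J_XJ_Z^{\mathrm T}=E_k$, $F_XF_Z^{\mathrm T}=E_{k_g}$. Let $v_1,\dots,v_q\in\mathrm{rs}J_Z$ be linearly independent (representing $\Sigma$), $J_{Z,A}$ the matrix with rows $v_1,\dots,v_q$; extend to a basis $v_1,\dots,v_k$ of $\mathrm{rs}J_Z$ and let $J_{Z,C}$ have rows $v_{q+1},\dots,v_k$. Let $\bar J_Z$ be the invertible $k\times k$ matrix with $\binom{J_{Z,A}}{J_{Z,C}}=\bar J_ZJ_Z$ and define $J_{X,A},J_{X,C}$ by $\binom{J_{X,A}}{J_{X,C}}=(\bar J_Z^{-1})^{\mathrm T}J_X$. A glue code $H_G\in\mathbb F_2^{r_G\times n_G}$ is compatible via pasting matrices $S\in\mathbb F_2^{n_G\times n}$, $T\in\mathbb F_2^{r_X\times r_G}$ if $H_XS^{\mathrm T}=TH_G$; it is coarsely devised for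 $\Sigma$ if $\mathrm{span}(v_1,\dots,v_q)\subseteq(\ker H_G)S$. Branch-sticker deformed code: coordinates split into blocks $u_0\in\mathbb F_2^n$, $u_1,\dots,u_{d_R-1}\in\mathbb F_2^{n_G}$, $w_1,\dots,w_{d_R-1}\in\mathbb F_2^{r_G}$. $H^{M\text{-}B}_X$ has row-block $0$ equal to $H_X$ on $u_0$ and $T$ on $w_1$, and for $1\le j\le d_R-1$ row-block $j$ equal to $H_G$ on $u_j$, $E_{r_G}$ on $w_j$ and $E_{r_G}$ on $w_{j+1}$ (the latter only if $j\le d_R-2$). $H^{M\text{-}B}_Z$ has row-block $0$ equal to $H_Z$ on $u_0$, and for $1\le i\le d_R-1$ row-block $i$ equal to $S$ on $u_0$ (only if $i=1$), $E_{n_G}$ on $u_{i-1}$ (only if $i\ge2$), $E_{n_G}$ on $u_i$, and $H_G^{\mathrm T}$ on $w_i$. With $J'_X=\binom{J_{X,A}}{J_{X,C}}$, $J'_Z=\binom{J_{Z,A}}{J_{Z,C}}$: $J^{M\text{-}B}_X$ equals $J'_X$ on $u_0$, $J'_XS^{\mathrm T}$ on each $u_j$ and $0$ on all $w_j$; $J^{M\text{-}B}_Z$ equals $J'_Z$ on $u_0$ and $0$ elsewhere. The block $u_{d_R-1}$ is the open boundary. *)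

theory Defs
  imports "Jordan_Normal_Form.Matrix_Kernel" "HOL-Library.Z2"
begin

text \<open>Matrices over F2 are Jordan_Normal_Form matrices with entries of type bit.
  Vectors are row vectors; a matrix A with nr rows and nc columns acts on
  row vectors by v |-> v A.\<close>

definition rs :: "bit mat \<Rightarrow> bit vec set" where
  "rs A = {A\<^sup>T *\<^sub>v c | c. c \<in> carrier_vec (dim_row A)}"

abbreviation ker :: "bit mat \<Rightarrow> bit vec set" where
  "ker A \<equiv> mat_kernel A"

definition direct_sum3 :: "bit vec set \<Rightarrow> bit vec set \<Rightarrow> bit vec set \<Rightarrow> bit vec set \<Rightarrow> bool" where
  "direct_sum3 V U1 U2 U3 \<longleftrightarrow>
     V = {a + b + c | a b c. a \<in> U1 \<and> b \<in> U2 \<and> c \<in> U3} \<and>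
     (\<forall>a b c. a \<in> U1 \<longrightarrow> b \<in> U2 \<longrightarrow> c \<in> U3 \<longrightarrow> a + b + c = 0\<^sub>v (dim_vec a)
        \<longrightarrow> a = 0\<^sub>v (dim_vec a) \<and> b = 0\<^sub>v (dim_vec b) \<and> c = 0\<^sub>v (dim_vec c))"

text \<open>The memory: CSS subsystem code data with k logical and kg gauge qubits.\<close>
definition css_subsystem_code ::
  "nat \<Rightarrow> nat \<Rightarrow> nat \<Rightarrow> nat \<Rightarrow> nat \<Rightarrow> bit mat \<Rightarrow> bit mat \<Rightarrow> bit mat \<Rightarrow> bit mat \<Rightarrow> bit mat \<Rightarrow> bit mat \<Rightarrow> bool" where
  "css_subsystem_code n rX rZ k kg HX HZ JX JZ FX FZ \<longleftrightarrow>
     HX \<in> carrier_mat rX n \<and> HZ \<in> carrier_mat rZ n \<and>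
     JX \<in> carrier_mat k n \<and> JZ \<in> carrier_mat k n \<and>
     FX \<in> carrier_mat kg n \<and> FZ \<in> carrier_mat kg n \<and>
     direct_sum3 (ker HX) (rs HZ) (rs JZ) (rs FZ) \<and>
     direct_sum3 (ker HZ) (rs HX) (rs JX) (rs FX) \<and>
     JX * JZ\<^sup>T = 1\<^sub>m k \<and> FX * FZ\<^sup>T = 1\<^sub>m kg"

text \<open>Coordinate layout of the branch-sticker deformed code with D = d_R:
  columns are ordered u_0 (n), u_1,...,u_{D-1} (nG each), w_1,...,w_{D-1} (rG each).
  Total length n + (D-1) nG + (D-1) rG.\<close>
definition mb_len :: "nat \<Rightarrow> nat \<Rightarrow> nat \<Rightarrow> nat \<Rightarrow> nat" where
  "mb_len n nG rG D = n + (D - 1) * nG + (D - 1) * rG"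

definition HX_MB :: "nat \<Rightarrow> nat \<Rightarrow> nat \<Rightarrow> nat \<Rightarrow> bit mat \<Rightarrow> bit mat \<Rightarrow> bit mat \<Rightarrow> bit mat" where
  "HX_MB n nG rG D HX HG T =
    (let rX = dim_row HX; wb = n + (D - 1) * nG in
     mat (rX + (D - 1) * rG) (mb_len n nG rG D) (\<lambda>(i, c).
       if i < rX then
         (if c < n then HX $$ (i, c)
          else if wb \<le> c \<and> c < wb + rG then T $$ (i, c - wb)
          else 0)
       else
         (let j = (i - rX) div rG + 1; a = (i - rX) mod rG in
          if c < n then 0
          else if c < wb then
            (let jj = (c - n) div nG + 1; b = (c - n) mod nG in
             if jj = j then HG $$ (a, b) else 0)
          else
            (let jj = (c - wb) div rG + 1; b = (c - wb) mod rG in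
             if (jj = j \<or> jj = j + 1) \<and> b = a then 1 else 0))))"

definition HZ_MB :: "nat \<Rightarrow> nat \<Rightarrow> nat \<Rightarrow> nat \<Rightarrow> bit mat \<Rightarrow> bit mat \<Rightarrow> bit mat \<Rightarrow> bit mat" where
  "HZ_MB n nG rG D HZ HG S =
    (let rZ = dim_row HZ; wb = n + (D - 1) * nG in
     mat (rZ + (D - 1) * nG) (mb_len n nG rG D) (\<lambda>(r, c).
       if r < rZ then
         (if c < n then HZ $$ (r, c) else 0)
       else
         (let i = (r - rZ) div nG + 1; a = (r - rZ) mod nG in
          if c < n then (if i = 1 then S $$ (a, c) else 0)
          else if c < wb then
            (let jj = (c - n) div nG + 1; b = (c - n) mod nG in
             if (jj = i \<or> jj + 1 = i) \<and> b = a then 1 else 0)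
          else
            (let jj = (c - wb) div rG + 1; b = (c - wb) mod rG in
             if jj = i then HG $$ (b, a) else 0))))"

definition JX_MB :: "nat \<Rightarrow> nat \<Rightarrow> nat \<Rightarrow> nat \<Rightarrow> bit mat \<Rightarrow> bit mat \<Rightarrow> bit mat" where
  "JX_MB n nG rG D JXp S =
    (let wb = n + (D - 1) * nG; JS = JXp * S\<^sup>T in
     mat (dim_row JXp) (mb_len n nG rG D) (\<lambda>(i, c).
       if c < n then JXp $$ (i, c)
       else if c < wb then JS $$ (i, (c - n) mod nG)
       else 0))"

definition JZ_MB :: "nat \<Rightarrow> nat \<Rightarrow> nat \<Rightarrow> nat \<Rightarrow> bit mat \<Rightarrow> bit mat" where
  "JZ_MB n nG rG D JZp =
     mat (dim_row JZp) (mb_len n nG rG D) (\<lambda>(i, c). if c < n then JZp $$ (i, c) else 0)"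

definition P_MB :: "nat \<Rightarrow> nat \<Rightarrow> nat \<Rightarrow> nat \<Rightarrow> bit mat" where
  "P_MB n nG rG D = mat n (mb_len n nG rG D) (\<lambda>(i, c). if c = i then 1 else 0)"

definition P_ob :: "nat \<Rightarrow> nat \<Rightarrow> nat \<Rightarrow> nat \<Rightarrow> bit mat" where
  "P_ob n nG rG D = mat nG (mb_len n nG rG D) (\<lambda>(i, c). if c = n + (D - 2) * nG + i then 1 else 0)"

end

theory Submission
  imports Defs
begin

declare add_bit_eq_xor[simp del] mult_bit_eq_and[simp del]

lemma bit_add_self[simp]: "(x::bit) + x = 0"
  by (cases x) auto

lemma rs_mult_sub:
  assumes "A = M * B" "M \<in> carrier_mat m r" "B \<in> carrier_mat r c"
  shows "rs A \<subseteq> rs B"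
proof
  fix x assume "x \<in> rs A"
  then obtain v where x: "x = A\<^sup>T *\<^sub>v v" and v: "v \<in> carrier_vec m"
    unfolding rs_def using assms by auto
  have "x = (B\<^sup>T * M\<^sup>T) *\<^sub>v v" using x assms by (simp add: transpose_mult)
  also have "\<dots> = B\<^sup>T *\<^sub>v (M\<^sup>T *\<^sub>v v)" using assms v by (simp del: assoc_mult_mat_vec add: assoc_mult_mat_vec[of _ c r _ m])
  finally show "x \<in> rs B" unfolding rs_def using assms v by auto
qed

lemma mult_entry:
  assumes "A \<in> carrier_mat m l" "B \<in> carrier_mat l p" "i < m" "j < p"
  shows "(A * B) $$ (i, j) = (\<Sum>t<l. A $$ (i, t) * B $$ (t, j))"
  using assms by (simp add: scalar_prod_def atLeast0LessThan)

lemma sum_lt_add: fixes a b :: nat shows "(\<Sum>t<a+b. f t) = (\<Sum>t<a. f t) + (\<Sum>t<b. f (a + t))"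
  by (induction b) (simp_all add: add_ac)

lemma sum_blocks: fixes m p :: nat shows "(\<Sum>t<m*p. f t) = (\<Sum>j<m. \<Sum>a<p. f (j*p + a))"
proof (induction m)
  case 0 then show ?case by simp
next
  case (Suc m)
  have "(\<Sum>t<Suc m*p. f t) = (\<Sum>t<m*p + p. f t)" by (simp add: add.commute)
  also have "\<dots> = (\<Sum>t<m*p. f t) + (\<Sum>a<p. f (m*p + a))" by (rule sum_lt_add)
  finally have "(\<Sum>t<Suc m*p. f t) = (\<Sum>t<m*p. f t) + (\<Sum>a<p. f (m*p + a))" .
  then show ?case using Suc by simp
qed
lemma dims[simp]:
  "dim_row (HX_MB n nG rG D HX HG T) = dim_row HX + (D - 1) * rG"
  "dim_col (HX_MB n nG rG D HX HG T) = mb_len n nG rG D"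
  "dim_row (HZ_MB n nG rG D HZ HG S) = dim_row HZ + (D - 1) * nG"
  "dim_col (HZ_MB n nG rG D HZ HG S) = mb_len n nG rG D"
  "dim_row (JX_MB n nG rG D JXp S) = dim_row JXp"
  "dim_col (JX_MB n nG rG D JXp S) = mb_len n nG rG D"
  "dim_row (JZ_MB n nG rG D JZp) = dim_row JZp"
  "dim_col (JZ_MB n nG rG D JZp) = mb_len n nG rG D"
  "dim_row (P_MB n nG rG D) = n"
  "dim_col (P_MB n nG rG D) = mb_len n nG rG D"
  "dim_row (P_ob n nG rG D) = nG"
  "dim_col (P_ob n nG rG D) = mb_len n nG rG D"
  by (simp_all add: HX_MB_def HZ_MB_def JX_MB_def JZ_MB_def P_MB_def P_ob_def Let_def)

lemma HX_MB_idx0: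
  "i < dim_row HX \<Longrightarrow> c < n \<Longrightarrow> HX_MB n nG rG D HX HG T $$ (i,c) = HX $$ (i,c)"
  "i < dim_row HX + (D - 1) * rG \<Longrightarrow> \<not> i < dim_row HX \<Longrightarrow> c < n \<Longrightarrow> HX_MB n nG rG D HX HG T $$ (i,c) = 0"
  unfolding HX_MB_def Let_def by (simp_all add: mb_len_def)

lemma P_MB_idx: "i < n \<Longrightarrow> c < mb_len n nG rG D \<Longrightarrow> P_MB n nG rG D $$ (i,c) = (if c = i then 1 else 0)"
  unfolding P_MB_def by simp

lemma P_ob_idx: "i < nG \<Longrightarrow> c < mb_len n nG rG D \<Longrightarrow> P_ob n nG rG D $$ (i,c) = (if c = n + (D - 2) * nG + i then 1 else 0)"
  unfolding P_ob_def by simp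

definition E :: "nat \<Rightarrow> nat \<Rightarrow> bit mat" where
  "E a b = mat a b (\<lambda>(i,j). if i = j then 1 else 0)"

lemma E_carrier[simp]: "E a b \<in> carrier_mat a b" by (simp add: E_def)

lemma E_mult:
  assumes "B \<in> carrier_mat b c"
  shows "E a b * B = mat a c (\<lambda>(i,j). if i < b then B $$ (i,j) else 0)"
proof (rule eq_matI)
  fix i j assume ij: "i < dim_row (mat a c (\<lambda>(i,j). if i < b then B $$ (i,j) else 0))"
    "j < dim_col (mat a c (\<lambda>(i,j). if i < b then B $$ (i,j) else 0))"
  then have "(E a b * B) $$ (i,j) = (\<Sum>t<b. E a b $$ (i,t) * B $$ (t,j))"
    using assms by (intro mult_entry[of _ a b _ c]) auto
  also have "\<dots> = (\<Sum>t<b. if t = i then B $$ (t,j) else 0)"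
    using ij by (intro sum.cong) (auto simp: E_def)
  also have "\<dots> = (if i < b then B $$ (i,j) else 0)" by simp
  finally show "(E a b * B) $$ (i,j) = mat a c (\<lambda>(i,j). if i < b then B $$ (i,j) else 0) $$ (i,j)"
    using ij by simp
qed (use assms in \<open>auto simp: E_def\<close>)

lemma claim1:
  assumes HX: "HX \<in> carrier_mat rX n" and HG: "HG \<in> carrier_mat rG nG" and T: "T \<in> carrier_mat rX rG"
    and D: "D \<ge> 2"
  shows "rs HX = rs (HX_MB n nG rG D HX HG T * (P_MB n nG rG D)\<^sup>T)"
proof -
  let ?R = "rX + (D - 1) * rG"
  let ?X = "HX_MB n nG rG D HX HG T * (P_MB n nG rG D)\<^sup>T"
  have X: "?X = mat ?R n (\<lambda>(i,j). if i < rX then HX $$ (i,j) else 0)"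
  proof (rule eq_matI)
    fix i j assume ij: "i < dim_row (mat ?R n (\<lambda>(i,j). if i < rX then HX $$ (i,j) else 0))"
      "j < dim_col (mat ?R n (\<lambda>(i,j). if i < rX then HX $$ (i,j) else 0))"
    have c1: "HX_MB n nG rG D HX HG T \<in> carrier_mat ?R (mb_len n nG rG D)"
      using HX unfolding carrier_mat_def by simp
    have c2: "(P_MB n nG rG D)\<^sup>T \<in> carrier_mat (mb_len n nG rG D) n"
      unfolding carrier_mat_def by simp
    have "?X $$ (i,j) = (\<Sum>t<mb_len n nG rG D. HX_MB n nG rG D HX HG T $$ (i,t) * (P_MB n nG rG D)\<^sup>T $$ (t,j))"
      using ij by (intro mult_entry[OF c1 c2]) simp_all
    also have "\<dots> = (\<Sum>t<mb_len n nG rG D. if t = j then HX_MB n nG rG D HX HG T $$ (i,t) else 0)"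
      using ij by (intro sum.cong refl) (simp add: P_MB_idx)
    also have "\<dots> = HX_MB n nG rG D HX HG T $$ (i,j)"
      using ij by (simp add: mb_len_def)
    also have "\<dots> = (if i < rX then HX $$ (i,j) else 0)"
      using ij HX by (simp add: HX_MB_idx0)
    finally show "?X $$ (i,j) = mat ?R n (\<lambda>(i,j). if i < rX then HX $$ (i,j) else 0) $$ (i,j)"
      using ij by simp
  qed (use HX in auto)
  have 1: "?X = E ?R rX * HX" using X E_mult[OF HX] by simp
  have 2: "HX = E rX ?R * ?X"
    unfolding X by (subst E_mult[of _ ?R n]) (use HX in \<open>auto intro!: eq_matI\<close>)
  show ?thesis
    using rs_mult_sub[OF 1 E_carrier HX] rs_mult_sub[OF 2 E_carrier, of n] X by auto
qed


lemma mult_PT: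
  assumes X: "X \<in> carrier_mat m (mb_len n nG rG D)"
  shows "X * (P_MB n nG rG D)\<^sup>T = mat m n (\<lambda>(i,j). X $$ (i,j))"
proof (rule eq_matI)
  fix i j assume ij: "i < dim_row (mat m n (\<lambda>(i,j). X $$ (i,j)))" "j < dim_col (mat m n (\<lambda>(i,j). X $$ (i,j)))"
  have c2: "(P_MB n nG rG D)\<^sup>T \<in> carrier_mat (mb_len n nG rG D) n"
    unfolding carrier_mat_def by simp
  have "(X * (P_MB n nG rG D)\<^sup>T) $$ (i,j) = (\<Sum>t<mb_len n nG rG D. X $$ (i,t) * (P_MB n nG rG D)\<^sup>T $$ (t,j))"
    using ij by (intro mult_entry[OF X c2]) simp_all
  also have "\<dots> = (\<Sum>t<mb_len n nG rG D. if t = j then X $$ (i,t) else 0)"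
    using ij by (intro sum.cong refl) (simp add: P_MB_idx)
  also have "\<dots> = X $$ (i,j)"
    using ij by (simp add: mb_len_def)
  finally show "(X * (P_MB n nG rG D)\<^sup>T) $$ (i,j) = mat m n (\<lambda>(i,j). X $$ (i,j)) $$ (i,j)"
    using ij by simp
qed (use X in auto)

lemma mult_P:
  assumes A: "A \<in> carrier_mat m n"
  shows "A * P_MB n nG rG D = mat m (mb_len n nG rG D) (\<lambda>(i,c). if c < n then A $$ (i,c) else 0)"
proof (rule eq_matI)
  fix i c assume ij: "i < dim_row (mat m (mb_len n nG rG D) (\<lambda>(i,c). if c < n then A $$ (i,c) else 0))"
    "c < dim_col (mat m (mb_len n nG rG D) (\<lambda>(i,c). if c < n then A $$ (i,c) else 0))"
  have c2: "P_MB n nG rG D \<in> carrier_mat n (mb_len n nG rG D)"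
    unfolding carrier_mat_def by simp
  have "(A * P_MB n nG rG D) $$ (i,c) = (\<Sum>t<n. A $$ (i,t) * P_MB n nG rG D $$ (t,c))"
    using ij by (intro mult_entry[OF A c2]) simp_all
  also have "\<dots> = (\<Sum>t<n. if c = t then A $$ (i,t) else 0)"
    using ij by (intro sum.cong refl) (simp add: P_MB_idx)
  also have "\<dots> = (if c < n then A $$ (i,c) else 0)"
    by simp
  finally show "(A * P_MB n nG rG D) $$ (i,c) = mat m (mb_len n nG rG D) (\<lambda>(i,c). if c < n then A $$ (i,c) else 0) $$ (i,c)"
    using ij by simp
qed (use A in auto)

lemma mult_Pob:
  assumes A: "A \<in> carrier_mat m nG"
  shows "A * P_ob n nG rG D = mat m (mb_len n nG rG D) (\<lambda>(i,c).
     if n + (D - 2) * nG \<le> c \<and> c < n + (D - 2) * nG + nG then A $$ (i, c - (n + (D - 2) * nG)) else 0)"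
    (is "_ = ?B")
proof (rule eq_matI)
  fix i c assume ij: "i < dim_row ?B" "c < dim_col ?B"
  let ?b = "n + (D - 2) * nG"
  have c2: "P_ob n nG rG D \<in> carrier_mat nG (mb_len n nG rG D)"
    unfolding carrier_mat_def by simp
  have "(A * P_ob n nG rG D) $$ (i,c) = (\<Sum>t<nG. A $$ (i,t) * P_ob n nG rG D $$ (t,c))"
    using ij by (intro mult_entry[OF A c2]) simp_all
  also have "\<dots> = (\<Sum>t<nG. if ?b \<le> c then (if t = c - ?b then A $$ (i,t) else 0) else 0)"
    using ij by (intro sum.cong refl) (auto simp add: P_ob_idx)
  also have "\<dots> = (if ?b \<le> c \<and> c < ?b + nG then A $$ (i, c - ?b) else 0)"
    by auto
  finally show "(A * P_ob n nG rG D) $$ (i,c) = ?B $$ (i,c)"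
    using ij by simp
qed (use A in auto)

lemma HZ_idx_top:
  "r < dim_row HZ \<Longrightarrow> c < mb_len n nG rG D \<Longrightarrow>
   HZ_MB n nG rG D HZ HG S $$ (r,c) = (if c < n then HZ $$ (r,c) else 0)"
  unfolding HZ_MB_def Let_def by simp

lemma HZ_idx_blk:
  assumes j: "j < D - 1" and a: "a < nG" and c: "c < mb_len n nG rG D"
  shows "HZ_MB n nG rG D HZ HG S $$ (dim_row HZ + (j * nG + a), c) =
    (if c < n then (if j = 0 then S $$ (a,c) else 0)
     else if c < n + (D - 1) * nG then
       (if ((c - n) div nG = j \<or> (c - n) div nG + 1 = j) \<and> (c - n) mod nG = a then 1 else 0)
     else (if (c - (n + (D - 1) * nG)) div rG = j then HG $$ ((c - (n + (D - 1) * nG)) mod rG, a) else 0))"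
proof -
  have "(j + 1) * nG \<le> (D - 1) * nG" using j by (intro mult_le_mono1) simp
  then have r: "j * nG + a < (D - 1) * nG" using a by simp
  have dv: "(j * nG + a) div nG = j" "(j * nG + a) mod nG = a" using a by auto
  show ?thesis
    unfolding HZ_MB_def Let_def using r c dv by auto
qed

lemma sum_sel:
  fixes f :: "nat \<Rightarrow> bit"
  assumes "b < N"
  shows "(\<Sum>a<N. f a * (if Q \<and> b = a then 1 else 0)) = (if Q then f b else 0)"
proof -
  have "(\<lambda>a. f a * (if Q \<and> b = a then 1 else 0)) = (\<lambda>a. if Q \<and> b = a then f a else 0)" by auto
  then show ?thesis using assms by (simp only:) (cases Q, simp_all)
qed

lemma claim5:
  assumes HZ: "HZ \<in> carrier_mat rZ n" and HG: "HG \<in> carrier_mat rG nG" and S: "S \<in> carrier_mat nG n"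
    and JG: "JG \<in> carrier_mat q nG" and ker: "rs JG \<subseteq> ker HG" and D: "D \<ge> 2"
  shows "rs ((JG * S) * P_MB n nG rG D + JG * P_ob n nG rG D) \<subseteq> rs (HZ_MB n nG rG D HZ HG S)"
proof -
  let ?L = "mb_len n nG rG D"
  let ?R = "rZ + (D - 1) * nG"
  let ?H = "HZ_MB n nG rG D HZ HG S"
  let ?wb = "n + (D - 1) * nG"
  let ?b = "n + (D - 2) * nG"
  obtain m where Dm: "D = 2 + m" using le_Suc_ex[OF D] by blast
  define M where "M = mat q ?R (\<lambda>(i,r). if r < rZ then 0 else JG $$ (i, (r - rZ) mod nG))"
  have Mc: "M \<in> carrier_mat q ?R" unfolding M_def by simp
  have Hc: "?H \<in> carrier_mat ?R ?L" using HZ unfolding carrier_mat_def by simp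
  have JGS: "JG * S \<in> carrier_mat q n" using JG S by simp
  have kerE: "(\<Sum>a<nG. JG $$ (i,a) * HG $$ (bb,a)) = 0" if i: "i < q" and bb: "bb < rG" for i bb
  proof -
    let ?v = "JG\<^sup>T *\<^sub>v unit_vec q i"
    have "?v \<in> rs JG" unfolding rs_def using JG by auto
    hence "HG *\<^sub>v ?v = 0\<^sub>v rG" using ker HG by (auto simp: mat_kernel_def)
    hence "(HG *\<^sub>v ?v) $ bb = 0" using bb by simp
    moreover have va: "?v $ a = JG $$ (i,a)" if "a < nG" for a
      using that i JG by simp
    moreover have "(HG *\<^sub>v ?v) $ bb = (\<Sum>a<nG. HG $$ (bb,a) * ?v $ a)"
      using bb HG JG by (simp add: mult_mat_vec_def scalar_prod_def atLeast0LessThan)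
    ultimately show ?thesis
      by (metis (no_types, lifting) lessThan_iff mult.commute sum.cong)
  qed
  have main: "(JG * S) * P_MB n nG rG D + JG * P_ob n nG rG D = M * ?H"
  proof (rule eq_matI)
    fix i c assume ic: "i < dim_row (M * ?H)" "c < dim_col (M * ?H)"
    then have i: "i < q" and c: "c < ?L" using Mc Hc by auto
    have lhs: "((JG * S) * P_MB n nG rG D + JG * P_ob n nG rG D) $$ (i,c) =
       (if c < n then (JG * S) $$ (i,c) else 0) +
       (if ?b \<le> c \<and> c < ?b + nG then JG $$ (i, c - ?b) else 0)"
      using i c JG S by (simp add: mult_P[OF JGS] mult_Pob[OF JG])
    have "(M * ?H) $$ (i,c) = (\<Sum>r<rZ + (D - 1) * nG. M $$ (i,r) * ?H $$ (r,c))"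
      by (rule mult_entry[OF Mc Hc i c])
    also have "\<dots> = (\<Sum>r<rZ. M $$ (i,r) * ?H $$ (r,c)) + (\<Sum>t<(D - 1) * nG. M $$ (i,rZ + t) * ?H $$ (rZ + t,c))"
      by (rule sum_lt_add)
    also have "\<dots> = (\<Sum>t<(D - 1) * nG. JG $$ (i, t mod nG) * ?H $$ (rZ + t,c))"
      using i by (simp add: M_def)
    also have "\<dots> = (\<Sum>j<D - 1. \<Sum>a<nG. JG $$ (i, (j * nG + a) mod nG) * ?H $$ (rZ + (j * nG + a),c))"
      by (rule sum_blocks)
    also have "\<dots> = (\<Sum>j<D - 1. \<Sum>a<nG. JG $$ (i, a) *
       (if c < n then (if j = 0 then S $$ (a,c) else 0)
        else if c < ?wb then
          (if ((c - n) div nG = j \<or> (c - n) div nG + 1 = j) \<and> (c - n) mod nG = a then 1 else 0)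
        else (if (c - ?wb) div rG = j then HG $$ ((c - ?wb) mod rG, a) else 0)))"
      using HZ_idx_blk[of _ D _ nG c n rG HZ HG S] HZ c by (intro sum.cong refl) auto
    finally have rhs: "(M * ?H) $$ (i,c) = \<dots>" .
    show "((JG * S) * P_MB n nG rG D + JG * P_ob n nG rG D) $$ (i,c) = (M * ?H) $$ (i,c)"
    proof (cases "c < n")
      case True
      have "(M * ?H) $$ (i,c) = (\<Sum>j<D - 1. if j = 0 then (\<Sum>a<nG. JG $$ (i, a) * S $$ (a,c)) else 0)"
        unfolding rhs using True by (intro sum.cong refl) (auto simp: sum_distrib_left)
      also have "\<dots> = (\<Sum>a<nG. JG $$ (i, a) * S $$ (a,c))" using Dm by simp
      also have "\<dots> = (JG * S) $$ (i,c)" using i True by (rule mult_entry[OF JG S, symmetric])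
      finally show ?thesis unfolding lhs using True by simp
    next
      case nn: False
      show ?thesis
      proof (cases "c < ?wb")
        case True
        define k where "k = (c - n) div nG"
        define bb where "bb = (c - n) mod nG"
        have nG: "nG > 0" using True nn by (cases nG) auto
        have bb: "bb < nG" unfolding bb_def using nG by simp
        have ck: "c - n = k * nG + bb" unfolding k_def bb_def by simp
        have k: "k < D - 1" unfolding k_def using True nn
          by (simp add: less_mult_imp_div_less)
        have "(M * ?H) $$ (i,c) = (\<Sum>j<D - 1. \<Sum>a<nG. JG $$ (i, a) * (if (k = j \<or> k + 1 = j) \<and> bb = a then 1 else 0))"
          unfolding rhs using True nn by (simp add: k_def[symmetric] bb_def[symmetric])
        also have "\<dots> = (\<Sum>j<D - 1. if k = j \<or> k + 1 = j then JG $$ (i, bb) else 0)"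
          using bb by (intro sum.cong refl) (rule sum_sel)
        also have "\<dots> = (\<Sum>j<D - 1. (if j = k then JG $$ (i, bb) else 0) + (if j = k + 1 then JG $$ (i, bb) else 0))"
          by (intro sum.cong refl) auto
        also have "\<dots> = JG $$ (i, bb) + (if k + 1 < D - 1 then JG $$ (i, bb) else 0)"
          using k by (simp add: sum.distrib)
        also have "\<dots> = (if k + 1 < D - 1 then 0 else JG $$ (i, bb))" by simp
        finally have r: "(M * ?H) $$ (i,c) = (if k + 1 < D - 1 then 0 else JG $$ (i, bb))" .
        show ?thesis
        proof (cases "k + 1 < D - 1")
          case True
          have "(k + 1) * nG \<le> (D - 2) * nG" using True by (intro mult_le_mono1) simp
          then have "\<not> (?b \<le> c)" using ck bb nn by simp
          then show ?thesis unfolding lhs r using nn True by simp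
        next
          case False
          then have "k = D - 2" using k by simp
          then have "c = ?b + bb" using ck nn by simp
          then show ?thesis unfolding lhs r using nn False bb by simp
        qed
      next
        case hi: False
        define k where "k = (c - ?wb) div rG"
        define bb where "bb = (c - ?wb) mod rG"
        have cL: "c < ?wb + (D - 1) * rG" using c by (simp add: mb_len_def)
        have rG: "rG > 0" using cL hi by (cases rG) auto
        have bb: "bb < rG" unfolding bb_def using rG by simp
        have "(M * ?H) $$ (i,c) = (\<Sum>j<D - 1. if j = k then (\<Sum>a<nG. JG $$ (i, a) * HG $$ (bb, a)) else 0)"
          unfolding rhs using hi nn
          by (intro sum.cong refl) (auto simp: k_def bb_def)
        also have "\<dots> = 0" using kerE[OF i bb] by simp
        finally have r: "(M * ?H) $$ (i,c) = 0" .
        have "?b + nG \<le> ?wb" using Dm by simp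
        then show ?thesis unfolding lhs r using hi nn by simp
      qed
    qed
  qed (use Mc Hc JG S in auto)
  show ?thesis by (rule rs_mult_sub[OF main Mc Hc])
qed


lemma claim2:
  assumes HZ: "HZ \<in> carrier_mat rZ n"
  shows "rs (HZ * P_MB n nG rG D) \<subseteq> rs (HZ_MB n nG rG D HZ HG S)"
proof -
  let ?R = "rZ + (D - 1) * nG"
  let ?H = "HZ_MB n nG rG D HZ HG S"
  have Hc: "?H \<in> carrier_mat ?R (mb_len n nG rG D)" using HZ unfolding carrier_mat_def by simp
  have eq: "HZ * P_MB n nG rG D = E rZ ?R * ?H"
    unfolding mult_P[OF HZ] E_mult[OF Hc]
    using HZ by (intro eq_matI) (auto simp: HZ_idx_top)
  show ?thesis by (rule rs_mult_sub[OF eq E_carrier Hc])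
qed

lemma JX_idx: "i < dim_row JXp \<Longrightarrow> c < n \<Longrightarrow> JX_MB n nG rG D JXp S $$ (i,c) = JXp $$ (i,c)"
  unfolding JX_MB_def Let_def by (simp add: mb_len_def)

lemma claim3:
  assumes JX: "JX \<in> carrier_mat k n" and Jb: "Jbar \<in> carrier_mat k k" "Jbar_inv \<in> carrier_mat k k"
    "Jbar_inv * Jbar = 1\<^sub>m k"
  shows "rs JX = rs (JX_MB n nG rG D (Jbar_inv\<^sup>T * JX) S * (P_MB n nG rG D)\<^sup>T)"
proof -
  let ?J = "Jbar_inv\<^sup>T * JX"
  have Jc: "?J \<in> carrier_mat k n" using JX Jb by simp
  have Xc: "JX_MB n nG rG D ?J S \<in> carrier_mat k (mb_len n nG rG D)" using Jc unfolding carrier_mat_def by simp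
  have eq: "JX_MB n nG rG D ?J S * (P_MB n nG rG D)\<^sup>T = ?J"
  proof (rule eq_matI)
    fix i j assume ij0: "i < dim_row ?J" "j < dim_col ?J"
    have ij: "i < k" "j < n" using ij0 Jc by auto
    have "mat k n (\<lambda>(i,j). JX_MB n nG rG D ?J S $$ (i,j)) $$ (i,j) = JX_MB n nG rG D ?J S $$ (i,j)"
      using ij Jc by simp
    also have "\<dots> = ?J $$ (i,j)" using ij Jc by (intro JX_idx) auto
    finally show "(JX_MB n nG rG D ?J S * (P_MB n nG rG D)\<^sup>T) $$ (i,j) = ?J $$ (i,j)"
      unfolding mult_PT[OF Xc] .
  qed (use Jc Xc in auto)
  have 1: "JX = Jbar\<^sup>T * ?J"
  proof -
    have t: "Jbar\<^sup>T * Jbar_inv\<^sup>T = 1\<^sub>m k" using transpose_mult[of Jbar_inv k k Jbar k] Jb by simp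
    have c1: "Jbar\<^sup>T \<in> carrier_mat k k" "Jbar_inv\<^sup>T \<in> carrier_mat k k" using Jb by auto
    have "Jbar\<^sup>T * ?J = (Jbar\<^sup>T * Jbar_inv\<^sup>T) * JX" by (rule assoc_mult_mat[OF c1 JX, symmetric])
    also have "\<dots> = JX" unfolding t using JX by simp
    finally show ?thesis by simp
  qed
  have "rs JX \<subseteq> rs ?J" using rs_mult_sub[OF 1, of k k n] Jb Jc by simp
  moreover have "rs ?J \<subseteq> rs JX" using rs_mult_sub[of ?J "Jbar_inv\<^sup>T" JX k k n] Jb JX by simp
  ultimately show ?thesis using eq by simp
qed

lemma claim4:
  assumes JZ: "JZ \<in> carrier_mat k n" and Jb: "Jbar \<in> carrier_mat k k" "Jbar_inv \<in> carrier_mat k k"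
    "Jbar_inv * Jbar = 1\<^sub>m k"
  shows "rs (JZ * P_MB n nG rG D) = rs (JZ_MB n nG rG D (Jbar * JZ))"
proof -
  let ?L = "mb_len n nG rG D"
  let ?A = "JZ * P_MB n nG rG D"
  have Ac: "?A \<in> carrier_mat k ?L" using JZ unfolding carrier_mat_def by simp
  have JJ: "Jbar * JZ \<in> carrier_mat k n" using Jb JZ by simp
  have Pc: "P_MB n nG rG D \<in> carrier_mat n ?L" unfolding carrier_mat_def by simp
  have eq1: "JZ_MB n nG rG D (Jbar * JZ) = Jbar * ?A"
  proof -
    have "Jbar * ?A = (Jbar * JZ) * P_MB n nG rG D"
      by (rule assoc_mult_mat[OF Jb(1) JZ Pc, symmetric])
    also have "\<dots> = JZ_MB n nG rG D (Jbar * JZ)"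
      unfolding mult_P[OF JJ] JZ_MB_def using Jb by simp
    finally show ?thesis by simp
  qed
  have eq2: "?A = Jbar_inv * JZ_MB n nG rG D (Jbar * JZ)"
  proof -
    have "Jbar_inv * (Jbar * ?A) = (Jbar_inv * Jbar) * ?A"
      by (rule assoc_mult_mat[OF Jb(2) Jb(1) Ac, symmetric])
    also have "\<dots> = ?A" unfolding Jb(3) by (rule left_mult_one_mat[OF Ac])
    finally show ?thesis unfolding eq1 by simp
  qed
  have Zc: "JZ_MB n nG rG D (Jbar * JZ) \<in> carrier_mat k ?L" using Jb unfolding carrier_mat_def by simp
  show ?thesis using rs_mult_sub[OF eq1 Jb(1) Ac] rs_mult_sub[OF eq2 Jb(2) Zc] by auto
qed

theorem lemma6:
  fixes n rX rZ k kg q nG rG dR :: nat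
    and HX HZ JX JZ FX FZ HG S T JG Jbar Jbar_inv :: "bit mat"
  assumes code: "css_subsystem_code n rX rZ k kg HX HZ JX JZ FX FZ"
    and dR: "dR \<ge> 2"
    and Jbar: "Jbar \<in> carrier_mat k k" "Jbar_inv \<in> carrier_mat k k"
      "Jbar * Jbar_inv = 1\<^sub>m k" "Jbar_inv * Jbar = 1\<^sub>m k"
    and q: "q \<le> k"
    and HG: "HG \<in> carrier_mat rG nG"
    and S: "S \<in> carrier_mat nG n" and T: "T \<in> carrier_mat rX rG"
    and compat: "HX * S\<^sup>T = T * HG"
    and JG: "JG \<in> carrier_mat q nG" "rs JG \<subseteq> ker HG"
    and JZA_eq: "mat q n (\<lambda>(i, j). (Jbar * JZ) $$ (i, j)) = JG * S"
  shows
    "let JZp = Jbar * JZ;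
         JXp = Jbar_inv\<^sup>T * JX;
         JZA = mat q n (\<lambda>(i, j). JZp $$ (i, j));
         P = P_MB n nG rG dR;
         Pob = P_ob n nG rG dR;
         HXmb = HX_MB n nG rG dR HX HG T;
         HZmb = HZ_MB n nG rG dR HZ HG S;
         JXmb = JX_MB n nG rG dR JXp S;
         JZmb = JZ_MB n nG rG dR JZp
     in rs HX = rs (HXmb * P\<^sup>T) \<and>
        rs (HZ * P) \<subseteq> rs HZmb \<and>
        rs JX = rs (JXmb * P\<^sup>T) \<and>
        rs (JZ * P) = rs JZmb \<and>
        rs (JZA * P + JG * Pob) \<subseteq> rs HZmb"
proof -
  have HX: "HX \<in> carrier_mat rX n" and HZ: "HZ \<in> carrier_mat rZ n"
    and JX: "JX \<in> carrier_mat k n" and JZ: "JZ \<in> carrier_mat k n"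
    using code unfolding css_subsystem_code_def by auto
  note c1 = claim1[OF HX HG T dR]
  note c2 = claim2[OF HZ]
  note c3 = claim3[OF JX Jbar(1,2,4)]
  note c4 = claim4[OF JZ Jbar(1,2,4)]
  note c5 = claim5[OF HZ HG S JG dR]
  show ?thesis unfolding Let_def JZA_eq
    using c1 c2 c3 c4 c5 by blast
qed

end
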